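(* Let $\mu$ be a $(C,\gamma)$-absolutely decaying measure on $\mathbb{R}$, let $K=\operatorname{supp}\mu$, and let $\alpha$ satisfy $$0<\alpha \le \frac14\left( \frac{1}{3C} \right)^{1/\gamma}.$$ Then for every bi-Lipschitz map $\varphi:\mathbb{R}\to\mathbb{R}$, every sequence $\mathcal Y=(y_n)_{n\in\mathbb{N}}$ of points of $\mathbb{T}=\mathbb{R}/\mathbb{Z}$, and every lacunary sequence $\mathcal T=(t_n)_{n\in\mathbb{N}}$ of positive reals, the set $\varphi\big(\tilde E(\mathcal T,\mathcal Y)\big)$ is $\alpha$-winning on $K$.
   Context: Balls are closed: $B(x,\rho)=\{z: d(x,z)\le\rho\}$. A locally finite Borel measure $\mu$ on $\mathbb{R}$ is $(C,\gamma)$-absolutely decaying ($C,\gamma>0$) if there is $\rho_0>0$ such that for all $0<\rho\le\rho_0$, all $x\in\operatorname{supp}\mu$, all $y\in\mathbb{R}$ and all $\varepsilon>0$: $\mu(B(x,\rho)\cap B(y,\varepsilon\rho))<C\varepsilon^\gamma\mu(B(x,\rho))$. A sequence $(t_n)$ of positive reals is lacunary if $\inf_n t_{n+1}/t_n>1$. With $\pi:\mathbb{R}\to\mathbb{T}$ the projection $x\mapsto x \bmod 1$ and $d$ the usual distance on $\mathbb{T}$, $\tilde E(\mathcal T,\mathcal Y)=\{x\in\mathbb{R}: \inf_{n\in\mathbb{N}} d(\pi(t_nx),y_n)>0\}$. A map $\varphi$ is bi-Lipschitz if there is $L\ge1$ with $L^{-1}\le|\varphi(x)-\varphi(y)|/|x-y|\le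 L$ for all $x\ne y$. Schmidt's game on a complete metric space $(X,d)$ with parameters $0<\alpha,\beta<1$ and target set $S\subset X$: on $\Omega=X\times\mathbb{R}_+$ write $(x_2,\rho_2)\le_s(x_1,\rho_1)$ if $\rho_2+d(x_1,x_2)\le\rho_1$. Bob picks $\omega_1=(x_1,\rho_1)$; then Alice and Bob alternately pick $\omega_k'=(x_k',\rho_k')\le_s\omega_k$ with $\rho_k'=\alpha\rho_k$ and $\omega_{k+1}=(x_{k+1},\rho_{k+1})\le_s\omega_k'$ with $\rho_{k+1}=\beta\rho_k'$. The nested balls $B(\omega_k)$ intersect in a single point $x_\infty$; Alice wins if $x_\infty\in S$. $S$ is $(\alpha,\beta)$-winning if Alice has a strategy that wins against every play of Bob, and $\alpha$-winning if it is $(\alpha,\beta)$-winning for every $\beta\in(0,1)$. For a closed $K\subset\mathbb{R}$, a set $S\subset\mathbb{R}$ is $\alpha$-winning on $K$ if $S\cap K$ is $\alpha$-winning for the game played on the metric space $K$ with the metric induced from $\mathbb{R}$ (i.e. all centers must lie in $K$). *)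

theory Defs
  imports "HOL-Analysis.Analysis"
begin

definition locally_finite_borel :: "real measure \<Rightarrow> bool" where
  "locally_finite_borel \<mu> \<longleftrightarrow> sets \<mu> = sets borel \<and>
     (\<forall>x. \<exists>U. open U \<and> x \<in> U \<and> emeasure \<mu> U < \<infinity>)"

definition msupp :: "real measure \<Rightarrow> real set" where
  "msupp \<mu> = {x. \<forall>U. open U \<and> x \<in> U \<longrightarrow> emeasure \<mu> U > 0}"

definition abs_decaying :: "real measure \<Rightarrow> real \<Rightarrow> real \<Rightarrow> bool" where
  "abs_decaying \<mu> C \<gamma> \<longleftrightarrow> locally_finite_borel \<mu> \<and> C > 0 \<and> \<gamma> > 0 \<and>
     (\<exists>\<rho>0>0. \<forall>\<rho> x y \<epsilon>. 0 < \<rho> \<and> \<rho> \<le> \<rho>0 \<and> x \<in> msupp \<mu> \<and> \<epsilon> > 0 \<longrightarrow>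
        emeasure \<mu> (cball x \<rho> \<inter> cball y (\<epsilon> * \<rho>))
          < ennreal (C * \<epsilon> powr \<gamma>) * emeasure \<mu> (cball x \<rho>))"

definition lacunary :: "(nat \<Rightarrow> real) \<Rightarrow> bool" where
  "lacunary t \<longleftrightarrow> (\<forall>n. t n > 0) \<and> (INF n. t (Suc n) / t n) > 1"

text \<open>Distance on the torus T = R/Z between the classes of two reals.\<close>
definition tdist :: "real \<Rightarrow> real \<Rightarrow> real" where
  "tdist a b = (INF k::int. \<bar>a - b - of_int k\<bar>)"

text \<open>The set tilde E(T,Y); the points y n of the torus are represented by reals.\<close>
definition Etilde :: "(nat \<Rightarrow> real) \<Rightarrow> (nat \<Rightarrow> real) \<Rightarrow> real set" where
  "Etilde t y = {x. (INF n. tdist (t n * x) (y n)) > 0}"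

definition bi_lipschitz :: "(real \<Rightarrow> real) \<Rightarrow> bool" where
  "bi_lipschitz \<phi> \<longleftrightarrow> (\<exists>L\<ge>1. \<forall>x y. x \<noteq> y \<longrightarrow>
      1 / L \<le> \<bar>\<phi> x - \<phi> y\<bar> / \<bar>x - y\<bar> \<and> \<bar>\<phi> x - \<phi> y\<bar> / \<bar>x - y\<bar> \<le> L)"

text \<open>Schmidt's game on the closed set K (metric induced from R).  Moves are
  pairs (center, radius).  Bob's moves are b 0, b 1, ...; Alice's strategy sigma
  maps the list of Bob's moves so far [b 0, ..., b k] to her move a k.\<close>
definition bob_legal :: "real set \<Rightarrow> real \<Rightarrow> (nat \<Rightarrow> real \<times> real) \<Rightarrow> (nat \<Rightarrow> real \<times> real) \<Rightarrow> nat \<Rightarrow> bool" where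
  "bob_legal K \<beta> a b k \<longleftrightarrow> fst (b 0) \<in> K \<and> snd (b 0) > 0 \<and>
     (\<forall>j<k. fst (b (Suc j)) \<in> K \<and> snd (b (Suc j)) = \<beta> * snd (a j) \<and>
            snd (b (Suc j)) + \<bar>fst (a j) - fst (b (Suc j))\<bar> \<le> snd (a j))"

definition alice_legal :: "real set \<Rightarrow> real \<Rightarrow> (nat \<Rightarrow> real \<times> real) \<Rightarrow> (nat \<Rightarrow> real \<times> real) \<Rightarrow> nat \<Rightarrow> bool" where
  "alice_legal K \<alpha> a b k \<longleftrightarrow> fst (a k) \<in> K \<and> snd (a k) = \<alpha> * snd (b k) \<and>
     snd (a k) + \<bar>fst (b k) - fst (a k)\<bar> \<le> snd (b k)"

definition winning_ab_on :: "real set \<Rightarrow> real \<Rightarrow> real \<Rightarrow> real set \<Rightarrow> bool" where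
  "winning_ab_on K \<alpha> \<beta> S \<longleftrightarrow>
     (\<exists>\<sigma> :: (real \<times> real) list \<Rightarrow> real \<times> real. \<forall>b :: nat \<Rightarrow> real \<times> real.
        let a = (\<lambda>k. \<sigma> (map b [0..<Suc k])) in
        (\<forall>k. bob_legal K \<beta> a b k \<longrightarrow> alice_legal K \<alpha> a b k) \<and>
        ((\<forall>k. bob_legal K \<beta> a b k) \<longrightarrow>
           (\<forall>x\<in>K. (\<forall>k. \<bar>x - fst (b k)\<bar> \<le> snd (b k)) \<longrightarrow> x \<in> S)))"

definition alpha_winning_on :: "real set \<Rightarrow> real \<Rightarrow> real set \<Rightarrow> bool" where
  "alpha_winning_on K \<alpha> S \<longleftrightarrow> (\<forall>\<beta>. 0 < \<beta> \<and> \<beta> < 1 \<longrightarrow> winning_ab_on K \<alpha> \<beta> S)"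

end

theory Submission
  imports Defs
begin

lemma int_diam:
  fixes S :: "int set" and D :: real
  assumes D: "D \<ge> 0" and d: "\<And>a b. a \<in> S \<Longrightarrow> b \<in> S \<Longrightarrow> real_of_int \<bar>a - b\<bar> \<le> D"
  shows "finite S \<and> real (card S) \<le> 2 * D + 1"
proof (cases "S = {}")
  case True then show ?thesis using D by simp
next
  case False
  then obtain a0 where a0: "a0 \<in> S" by blast
  have sub: "S \<subseteq> {a0 - \<lfloor>D\<rfloor> .. a0 + \<lfloor>D\<rfloor>}"
  proof
    fix b assume "b \<in> S"
    then have "real_of_int \<bar>b - a0\<bar> \<le> D" using d a0 by blast
    then have "\<bar>b - a0\<bar> \<le> \<lfloor>D\<rfloor>" by (simp add: le_floor_iff)
    then show "b \<in> {a0 - \<lfloor>D\<rfloor> .. a0 + \<lfloor>D\<rfloor>}" by auto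
  qed
  have fin: "finite S" using sub finite_subset by blast
  have "card S \<le> card {a0 - \<lfloor>D\<rfloor> .. a0 + \<lfloor>D\<rfloor>}" using sub by (intro card_mono) auto
  also have "\<dots> = nat (2 * \<lfloor>D\<rfloor> + 1)" by simp
  finally have "real (card S) \<le> real (nat (2 * \<lfloor>D\<rfloor> + 1))" by linarith
  also have "\<dots> = 2 * real_of_int \<lfloor>D\<rfloor> + 1" using D by simp
  also have "\<dots> \<le> 2 * D + 1" by linarith
  finally show ?thesis using fin by simp
qed


locale gm =
  fixes \<mu> :: "real measure" and C \<gamma> \<rho>0 \<alpha> \<beta> L q0 :: real
    and \<phi> :: "real \<Rightarrow> real" and t y :: "nat \<Rightarrow> real"
  assumes Cpos: "C > 0" and gpos: "\<gamma> > 0" and r0pos: "\<rho>0 > 0"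
  and sets_mu: "sets \<mu> = sets borel"
  and decay: "\<And>\<rho> x y \<epsilon>. 0 < \<rho> \<Longrightarrow> \<rho> \<le> \<rho>0 \<Longrightarrow> x \<in> msupp \<mu> \<Longrightarrow> \<epsilon> > 0 \<Longrightarrow>
      emeasure \<mu> (cball x \<rho> \<inter> cball y (\<epsilon> * \<rho>)) < ennreal (C * \<epsilon> powr \<gamma>) * emeasure \<mu> (cball x \<rho>)"
  and apos: "\<alpha> > 0" and abound: "\<alpha> \<le> (1/4) * (1/(3*C)) powr (1/\<gamma>)"
  and bpos: "\<beta> > 0" and blt1: "\<beta> < 1"
  and L1: "L \<ge> 1" and lip1: "\<And>a b. \<bar>a - b\<bar> \<le> L * \<bar>\<phi> a - \<phi> b\<bar>"
  and lip2: "\<And>a b. \<bar>\<phi> a - \<phi> b\<bar> \<le> L * \<bar>a - b\<bar>"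
  and tpos: "\<And>n. t n > 0" and q1: "q0 > 1" and tq: "\<And>n. t (Suc n) \<ge> q0 * t n"
  and Kne: "msupp \<mu> \<noteq> {}"
begin

definition "eps0 = (1/(3*C)) powr (1/\<gamma>)"

lemma eps0_pos: "eps0 > 0" using Cpos unfolding eps0_def by simp

lemma C_eps0: "C * eps0 powr \<gamma> = 1/3"
proof -
  have "eps0 powr \<gamma> = (1/(3*C)) powr ((1/\<gamma>) * \<gamma>)" unfolding eps0_def by (simp add: powr_powr)
  also have "\<dots> = 1/(3*C)" using gpos Cpos by (simp add: powr_one)
  finally show ?thesis using Cpos by simp
qed

lemma kill:
  assumes x: "x \<in> msupp \<mu>" and r: "0 < r" "r \<le> \<rho>0"
  shows "\<exists>z \<in> msupp \<mu>. \<bar>z - x\<bar> \<le> r \<and> eps0 * r \<le> \<bar>z - q\<bar>"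
proof (rule ccontr)
  assume H: "\<not> ?thesis"
  define A where "A = cball x r \<inter> {w. eps0 * r \<le> \<bar>w - q\<bar>}"
  have cA: "compact A" unfolding A_def
    by (intro compact_Int_closed compact_cball closed_Collect_le continuous_intros)
  have nK: "\<forall>w\<in>A. \<exists>U. open U \<and> w \<in> U \<and> emeasure \<mu> U = 0"
  proof
    fix w assume "w \<in> A"
    then have "w \<notin> msupp \<mu>" using H unfolding A_def by (auto simp: dist_real_def abs_minus_commute)
    then show "\<exists>U. open U \<and> w \<in> U \<and> emeasure \<mu> U = 0" unfolding msupp_def by auto
  qed
  then obtain U where U: "\<And>w. w \<in> A \<Longrightarrow> open (U w) \<and> w \<in> U w \<and> emeasure \<mu> (U w) = 0"
    by metis
  obtain F where F: "F \<subseteq> A" "finite F" "A \<subseteq> (\<Union>c\<in>F. U c)"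
    using compactE_image[OF cA, of A U] U by blast
  have "(\<Union>c\<in>F. U c) \<in> null_sets \<mu>"
    using F U by (intro null_sets_UN') (auto simp: countable_finite sets_mu null_sets_def)
  then have "emeasure \<mu> (\<Union>c\<in>F. U c) = 0" by auto
  moreover have "emeasure \<mu> A \<le> emeasure \<mu> (\<Union>c\<in>F. U c)"
    using F(3) \<open>(\<Union>c\<in>F. U c) \<in> null_sets \<mu>\<close> by (intro emeasure_mono) auto
  ultimately have A0: "emeasure \<mu> A = 0" by simp
  let ?E = "emeasure \<mu> (cball x r)"
  have "ball x r \<subseteq> cball x r" by auto
  then have "emeasure \<mu> (ball x r) \<le> ?E" by (intro emeasure_mono) (auto simp: sets_mu)
  moreover have "emeasure \<mu> (ball x r) > 0" using x r unfolding msupp_def by auto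
  ultimately have Epos: "?E > 0" by auto
  have sub: "cball x r \<subseteq> (cball x r \<inter> cball q (eps0 * r)) \<union> A"
    unfolding A_def by (auto simp: dist_real_def)
  have "?E \<le> emeasure \<mu> ((cball x r \<inter> cball q (eps0 * r)) \<union> A)"
    by (intro emeasure_mono[OF sub]) (auto simp: sets_mu A_def)
  also have "\<dots> \<le> emeasure \<mu> (cball x r \<inter> cball q (eps0 * r)) + emeasure \<mu> A"
    by (intro emeasure_subadditive) (auto simp: sets_mu A_def)
  also have "\<dots> = emeasure \<mu> (cball x r \<inter> cball q (eps0 * r))" using A0 by auto
  also have "\<dots> < ennreal (C * eps0 powr \<gamma>) * ?E"
    using decay[OF r x eps0_pos] by (simp add: mult.commute)
  also have "\<dots> = ennreal (1/3) * ?E" by (simp add: C_eps0)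
  also have "\<dots> \<le> 1 * ?E" by (intro mult_right_mono) auto
  finally show False by simp
qed

lemma t_mono: "m \<le> n \<Longrightarrow> t m \<le> t n"
proof (induction n rule: dec_induct)
  case (step n)
  have "1 * t n \<le> q0 * t n" using q1 tpos[of n] by (intro mult_right_mono) auto
  then show ?case using tq[of n] step by simp
qed simp

lemma t_geom: "q0 ^ k * t n \<le> t (n + k)"
proof (induction k)
  case (Suc k)
  have "q0 ^ Suc k * t n = q0 * (q0 ^ k * t n)" by simp
  also have "\<dots> \<le> q0 * t (n + k)" using Suc q1 by (intro mult_left_mono) auto
  also have "\<dots> \<le> t (n + Suc k)" using tq[of "n+k"] by simp
  finally show ?case .
qed simp

lemma fin_t: "finite {n. t n \<le> T}"
proof -
  obtain N where N: "T / t 0 < q0 ^ N" using real_arch_pow[OF q1] by blast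
  have "{n. t n \<le> T} \<subseteq> {..<N}"
  proof
    fix n assume "n \<in> {n. t n \<le> T}"
    then have tn: "t n \<le> T" by simp
    show "n \<in> {..<N}"
    proof (rule ccontr)
      assume "n \<notin> {..<N}"
      then have "N \<le> n" by simp
      have a1: "q0 ^ N \<le> q0 ^ n" using \<open>N \<le> n\<close> q1 by (simp add: power_increasing)
      have "q0 ^ n * t 0 \<le> t n" using t_geom[where n=0 and k=n] by simp
      then have "q0 ^ n \<le> t n / t 0" using tpos[of 0] by (simp add: field_simps)
      moreover have "t n / t 0 \<le> T / t 0" using tn tpos[of 0] by (intro divide_right_mono) auto
      ultimately have "q0 ^ N \<le> T / t 0" using a1 by linarith
      with N show False by simp
    qed
  qed
  then show ?thesis using finite_subset by blast
qed

lemma band: assumes "0 < l" "l < 1" shows "\<exists>M0::nat. \<forall>a>0. card {n. a < t n \<and> t n \<le> a / l} \<le> M0"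
proof -
  obtain M0 where M0: "1 / l < q0 ^ M0" using real_arch_pow[OF q1] by blast
  have "card {n. a < t n \<and> t n \<le> a / l} \<le> M0" if a: "a > 0" for a
  proof (cases "{n. a < t n \<and> t n \<le> a / l} = {}")
    case True then show ?thesis by (metis card.empty zero_le)
  next
    case False
    let ?S = "{n. a < t n \<and> t n \<le> a / l}"
    have fS: "finite ?S" by (rule finite_subset[OF _ fin_t[of "a/l"]]) auto
    define n0 where "n0 = Min ?S"
    have n0S: "n0 \<in> ?S" unfolding n0_def using fS False by (rule Min_in)
    have "?S \<subseteq> {n0..<n0+M0}"
    proof
      fix n assume nS: "n \<in> ?S"
      have "n0 \<le> n" unfolding n0_def using fS nS by simp
      moreover have "n < n0 + M0"
      proof (rule ccontr)
        assume "\<not> n < n0 + M0"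
        then obtain k where k: "n = n0 + k" "M0 \<le> k" using \<open>n0 \<le> n\<close>
          by (metis le_add_diff_inverse not_less add_le_cancel_left)
        have "q0 ^ M0 \<le> q0 ^ k" using k q1 by (simp add: power_increasing)
        have "q0 ^ k * t n0 \<le> t n" using t_geom[where n=n0 and k=k] k by simp
        have "1 / l * t n0 < q0 ^ M0 * t n0" using M0 tpos[of n0] by (intro mult_strict_right_mono) auto
        also have "\<dots> \<le> q0 ^ k * t n0" using \<open>q0 ^ M0 \<le> q0 ^ k\<close> tpos[of n0] by simp
        also have "\<dots> \<le> t n" by fact
        also have "\<dots> \<le> a / l" using nS by simp
        finally have "t n0 / l < a / l" by simp
        then have "t n0 < a" using assms by (simp add: divide_less_cancel)
        with n0S show False by simp
      qed
      ultimately show "n \<in> {n0..<n0+M0}" by simp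
    qed
    then have "card ?S \<le> card {n0..<n0+M0}" by (intro card_mono) auto
    then show ?thesis by simp
  qed
  then show ?thesis by blast
qed

lemma phi_cont: "continuous_on S \<phi>"
proof -
  have "lipschitz_on L S \<phi>" unfolding lipschitz_on_def using lip2 L1 by (auto simp: dist_real_def)
  then show ?thesis by (rule lipschitz_on_continuous_on)
qed

lemma phi_inj: "inj \<phi>"
proof (rule injI)
  fix a b assume "\<phi> a = \<phi> b" then show "a = b" using lip1[of a b] by simp
qed

lemma phi_surj: "\<exists>u. \<phi> u = v"
proof -
  define T where "T = L * (\<bar>v - \<phi> 0\<bar> + 1)"
  have T: "T > 0" unfolding T_def using L1 by (simp add: add_pos_nonneg)
  have d1: "\<bar>\<phi> T - \<phi> 0\<bar> \<ge> \<bar>v - \<phi> 0\<bar> + 1" using lip1[of T 0] T L1 unfolding T_def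
    by (simp add: mult_le_cancel_left_pos)
  have d2: "\<bar>\<phi> (-T) - \<phi> 0\<bar> \<ge> \<bar>v - \<phi> 0\<bar> + 1" using lip1[of "-T" 0] T L1 unfolding T_def
    by (simp add: mult_le_cancel_left_pos)
  have "(\<phi> (-T) < \<phi> 0 \<and> \<phi> 0 < \<phi> T) \<or> (\<phi> T < \<phi> 0 \<and> \<phi> 0 < \<phi> (-T))"
    using continuous_inj_imp_mono[of "-T" 0 T \<phi>] T phi_cont phi_inj by (auto simp: inj_on_def inj_def)
  then show ?thesis
  proof
    assume h: "\<phi> (-T) < \<phi> 0 \<and> \<phi> 0 < \<phi> T"
    then have "\<phi> (-T) \<le> v" "v \<le> \<phi> T" using d1 d2 by linarith+
    then show ?thesis using IVT'[of \<phi> "-T" v T] T phi_cont by auto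
  next
    assume h: "\<phi> T < \<phi> 0 \<and> \<phi> 0 < \<phi> (-T)"
    then have "\<phi> T \<le> v" "v \<le> \<phi> (-T)" using d1 d2 by linarith+
    then show ?thesis using IVT2'[of \<phi> T v "-T"] T phi_cont by auto
  qed
qed

definition "lam = \<alpha> * \<beta>"
definition "theta = ln (3/2) / ln (1/lam)"
definition "cc = min 1 (2 * \<rho>0 * t 0)"
definition "pp n m = \<phi> ((y n + of_int m) / t n)"
definition "wt n \<rho> = (cc / (t n * \<rho>)) powr theta"
definition "pend \<delta> x \<rho> = {(n,m). t n * \<rho> \<le> cc \<and> \<bar>pp n m - x\<bar> \<le> \<rho> + L * \<delta> / t n}"
definition "Wt \<rho> S = (\<Sum>nm\<in>S. wt (fst nm) \<rho>)"
definition "eta = (1 - \<beta>) / 4"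
definition "rr \<rho> = lam * (1 + eta) * \<rho>"
definition "win \<delta> x \<rho> q = pend \<delta> x \<rho> \<inter> {nm. \<bar>pp (fst nm) (snd nm) - q\<bar> \<le> rr \<rho>}"
definition "qsel \<delta> x \<rho> = (SOME q. \<forall>q'. Wt \<rho> (win \<delta> x \<rho> q') \<le> Wt \<rho> (win \<delta> x \<rho> q))"
definition "zsel x \<rho> q = (SOME z. z \<in> msupp \<mu> \<and> \<bar>z - x\<bar> \<le> \<rho>/2 \<and> eps0 * (\<rho>/2) \<le> \<bar>z - q\<bar>)"
definition "move \<delta> xr = (if snd xr / 2 \<le> \<rho>0 \<and> fst xr \<in> msupp \<mu> \<and> 0 < snd xr
     then (zsel (fst xr) (snd xr) (qsel \<delta> (fst xr) (snd xr)), \<alpha> * snd xr) else (fst xr, \<alpha> * snd xr))"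
definition "M0 = (SOME M::nat. \<forall>a>0. card {n. a < t n \<and> t n \<le> a / lam} \<le> M)"
definition "NN = real M0 * (8 * L * cc + 1)"
definition "Bnd x0 r0 = max 1 (max (Wt r0 (pend 1 x0 r0)) (6 * NN))"
definition "dl x0 r0 = min 1 (min (lam * cc / L) (eta * lam * cc / (L * Bnd x0 r0 powr (1/theta))))"

lemma lam_pos: "0 < lam" and lam_lt: "lam < \<alpha>" and lam1: "lam < 1"
proof -
  show "0 < lam" unfolding lam_def using apos bpos by simp
  show "lam < \<alpha>" unfolding lam_def using apos blt1 by simp
  have "eps0 \<le> 1"
  proof -
    obtain x where x: "x \<in> msupp \<mu>" using Kne by blast
    obtain z where "\<bar>z - x\<bar> \<le> \<rho>0" "eps0 * \<rho>0 \<le> \<bar>z - x\<bar>" using kill[OF x r0pos order.refl, of x] by blast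
    then have "eps0 * \<rho>0 \<le> 1 * \<rho>0" by linarith
    then show ?thesis using r0pos by (simp only: mult_le_cancel_right_pos)
  qed
  then have "\<alpha> \<le> 1/4" using abound unfolding eps0_def by simp
  then show "lam < 1" using \<open>lam < \<alpha>\<close> by simp
qed

lemma alpha_le: "\<alpha> \<le> eps0 / 4" and alpha_quarter: "\<alpha> \<le> 1/4"
proof -
  show "\<alpha> \<le> eps0 / 4" using abound unfolding eps0_def by simp
  have "eps0 \<le> 1"
  proof -
    obtain x where x: "x \<in> msupp \<mu>" using Kne by blast
    obtain z where "\<bar>z - x\<bar> \<le> \<rho>0" "eps0 * \<rho>0 \<le> \<bar>z - x\<bar>" using kill[OF x r0pos order.refl, of x] by blast
    then have "eps0 * \<rho>0 \<le> 1 * \<rho>0" by linarith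
    then show ?thesis using r0pos by (simp only: mult_le_cancel_right_pos)
  qed
  then show "\<alpha> \<le> 1/4" using abound unfolding eps0_def by simp
qed

lemma theta_pos: "theta > 0"
  unfolding theta_def using lam_pos lam1 by (simp add: divide_pos_pos)

lemma w_eq: "(1/lam) powr theta = 3/2"
proof -
  have "ln (1/lam) > 0" using lam_pos lam1 by simp
  then show ?thesis unfolding theta_def powr_def using lam_pos by simp
qed

lemma cc_pos: "cc > 0" and cc_le1: "cc \<le> 1" and cc_le: "cc \<le> 2 * \<rho>0 * t 0"
  unfolding cc_def using r0pos tpos[of 0] by auto

lemma eta_pos: "eta > 0" unfolding eta_def using blt1 by simp

lemma lam_eta: "lam * (1 + 2 * eta) < \<alpha>"
proof -
  have e: "\<beta> * (1 + 2 * eta) = \<beta> + (\<beta> / 2) * (1 - \<beta>)" by (simp add: eta_def field_simps)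
  have "(\<beta> / 2) * (1 - \<beta>) < 1 * (1 - \<beta>)" using bpos blt1 by (intro mult_strict_right_mono) auto
  then have "\<beta> * (1 + 2 * eta) < 1" using e by simp
  then have "\<alpha> * (\<beta> * (1 + 2 * eta)) < \<alpha> * 1" using apos by (intro mult_strict_left_mono) auto
  then show ?thesis unfolding lam_def by (simp add: mult.assoc)
qed

lemma wt_nonneg: "wt n \<rho> \<ge> 0" unfolding wt_def by simp

lemma wt_lam: assumes "\<rho> > 0" shows "wt n (lam * \<rho>) = 3/2 * wt n \<rho>"
proof -
  have "cc / (t n * (lam * \<rho>)) = (1/lam) * (cc / (t n * \<rho>))" using lam_pos by (simp add: field_simps)
  then have "wt n (lam * \<rho>) = ((1/lam) * (cc / (t n * \<rho>))) powr theta" unfolding wt_def by (simp add: mult_ac)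
  also have "\<dots> = (1/lam) powr theta * (cc / (t n * \<rho>)) powr theta"
    using lam_pos cc_pos tpos[of n] assms by (intro powr_mult)
  finally show ?thesis using w_eq unfolding wt_def by simp
qed

lemma mdiff: "real_of_int \<bar>m1 - m2\<bar> \<le> L * t n * \<bar>pp n m1 - pp n m2\<bar>"
proof -
  have e: "(y n + of_int m1) / t n - (y n + of_int m2) / t n = of_int (m1 - m2) / t n"
    using tpos[of n] by (simp add: field_simps)
  have "\<bar>of_int (m1 - m2) / t n\<bar> \<le> L * \<bar>pp n m1 - pp n m2\<bar>"
    using lip1[of "(y n + of_int m1) / t n" "(y n + of_int m2) / t n"] unfolding pp_def e .
  then have "\<bar>of_int (m1 - m2)\<bar> / t n \<le> L * \<bar>pp n m1 - pp n m2\<bar>" using tpos[of n] by simp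
  then show ?thesis using tpos[of n] by (simp add: field_simps)
qed

lemma mset_bound:
  assumes R: "R \<ge> 0"
  shows "finite {m. \<bar>pp n m - x\<bar> \<le> R} \<and> real (card {m. \<bar>pp n m - x\<bar> \<le> R}) \<le> 2 * (2 * L * t n * R) + 1"
proof (rule int_diam)
  show "0 \<le> 2 * L * t n * R" using L1 tpos[of n] R by simp
  fix a b assume "a \<in> {m. \<bar>pp n m - x\<bar> \<le> R}" "b \<in> {m. \<bar>pp n m - x\<bar> \<le> R}"
  then have "\<bar>pp n a - pp n b\<bar> \<le> 2 * R" by simp
  then have "L * t n * \<bar>pp n a - pp n b\<bar> \<le> L * t n * (2 * R)"
    using L1 tpos[of n] by (intro mult_left_mono) auto
  then show "real_of_int \<bar>a - b\<bar> \<le> 2 * L * t n * R" using mdiff[of a b n] by simp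
qed

lemma pend_fin: assumes "\<rho> > 0" "\<delta> \<ge> 0" shows "finite (pend \<delta> x \<rho>)"
proof -
  have "pend \<delta> x \<rho> \<subseteq> Sigma {n. t n \<le> cc / \<rho>} (\<lambda>n. {m. \<bar>pp n m - x\<bar> \<le> \<rho> + L * \<delta> / t n})"
    unfolding pend_def using assms by (auto simp: field_simps)
  moreover have "finite {m. \<bar>pp n m - x\<bar> \<le> \<rho> + L * \<delta> / t n}" for n
  proof -
    have "\<rho> + L * \<delta> / t n \<ge> 0" using assms L1 tpos[of n] by simp
    then show ?thesis using mset_bound by blast
  qed
  then have "finite (Sigma {n. t n \<le> cc / \<rho>} (\<lambda>n. {m. \<bar>pp n m - x\<bar> \<le> \<rho> + L * \<delta> / t n}))"
    using fin_t by (intro finite_SigmaI) auto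
  ultimately show ?thesis using finite_subset by blast
qed

lemma Wt_nonneg: "Wt \<rho> S \<ge> 0" unfolding Wt_def by (intro sum_nonneg wt_nonneg)

lemma Wt_mono: "finite T \<Longrightarrow> S \<subseteq> T \<Longrightarrow> Wt \<rho> S \<le> Wt \<rho> T"
  unfolding Wt_def by (intro sum_mono2 wt_nonneg) auto

lemma old_bound:
  assumes "\<rho> > 0" "\<delta> \<ge> 0" "nm \<in> pend \<delta> x \<rho>" "Wt \<rho> (pend \<delta> x \<rho>) \<le> B"
  shows "cc / (t (fst nm) * \<rho>) \<le> B powr (1/theta)"
proof -
  let ?a = "cc / (t (fst nm) * \<rho>)"
  have "wt (fst nm) \<rho> = Wt \<rho> {nm}" unfolding Wt_def by simp
  also have "\<dots> \<le> Wt \<rho> (pend \<delta> x \<rho>)" using assms pend_fin by (intro Wt_mono) auto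
  finally have "?a powr theta \<le> B" using assms unfolding wt_def by simp
  then have "(?a powr theta) powr (1/theta) \<le> B powr (1/theta)"
    using theta_pos by (intro powr_mono2) auto
  moreover have "(?a powr theta) powr (1/theta) = ?a"
    using theta_pos cc_pos tpos[of "fst nm"] assms by (simp add: powr_powr)
  ultimately show ?thesis by simp
qed

lemma s_small:
  assumes "\<rho> > 0" "\<delta> > 0" "nm \<in> pend \<delta> x \<rho>" "Wt \<rho> (pend \<delta> x \<rho>) \<le> B" "B \<ge> 1"
    and d: "\<delta> \<le> eta * lam * cc / (L * B powr (1/theta))"
  shows "L * \<delta> / t (fst nm) \<le> eta * lam * \<rho>"
proof -
  define n where "n = fst nm"
  define Bp where "Bp = B powr (1/theta)"
  have Bp: "Bp > 0" using assms unfolding Bp_def by simp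
  have tn: "t n > 0" using tpos by simp
  have "cc / (t n * \<rho>) \<le> Bp" using old_bound[OF assms(1) less_imp_le[OF assms(2)] assms(3) assms(4)] unfolding n_def Bp_def .
  then have c1: "cc \<le> Bp * (t n * \<rho>)" using tn assms by (simp add: divide_le_eq mult_ac)
  have LBp: "L * Bp > 0" using L1 Bp by simp
  have h1: "\<delta> * (L * Bp) \<le> eta * lam * cc" using d unfolding Bp_def[symmetric]
    by (simp add: pos_le_divide_eq[OF LBp])
  have h2: "eta * lam * cc \<le> eta * lam * (Bp * (t n * \<rho>))"
    using c1 eta_pos lam_pos by (intro mult_left_mono) auto
  have "(L * \<delta>) * Bp \<le> (eta * lam * (t n * \<rho>)) * Bp" using h1 h2 by (simp add: mult_ac)
  then have "L * \<delta> \<le> eta * lam * (t n * \<rho>)" using Bp by simp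
  then show ?thesis unfolding n_def[symmetric] using tn by (simp add: pos_divide_le_eq mult_ac)
qed

lemma qsel_max:
  assumes "\<rho> > 0" "\<delta> \<ge> 0"
  shows "Wt \<rho> (win \<delta> x \<rho> q') \<le> Wt \<rho> (win \<delta> x \<rho> (qsel \<delta> x \<rho>))"
proof -
  define f where "f = (\<lambda>q. Wt \<rho> (win \<delta> x \<rho> q))"
  have "range f \<subseteq> Wt \<rho> ` Pow (pend \<delta> x \<rho>)"
  proof
    fix v assume "v \<in> range f"
    then obtain q where "v = f q" by blast
    moreover have "win \<delta> x \<rho> q \<in> Pow (pend \<delta> x \<rho>)" unfolding win_def by blast
    ultimately show "v \<in> Wt \<rho> ` Pow (pend \<delta> x \<rho>)" unfolding f_def by blast
  qed
  then have fin: "finite (range f)" using pend_fin[OF assms] finite_subset by blast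
  have "Max (range f) \<in> range f" using fin by (intro Max_in) auto
  then obtain q0 where q0: "f q0 = Max (range f)" by auto
  have "\<forall>q'. f q' \<le> f q0" using q0 fin by (metis Max_ge rangeI)
  then have "\<exists>q. \<forall>q'. f q' \<le> f q" by blast
  then have "\<forall>q'. f q' \<le> f (qsel \<delta> x \<rho>)" unfolding qsel_def f_def by (rule someI_ex)
  then show ?thesis unfolding f_def by blast
qed


lemma M0_prop: "a > 0 \<Longrightarrow> card {n. a < t n \<and> t n \<le> a / lam} \<le> M0"
proof -
  assume a: "a > 0"
  have "\<exists>M::nat. \<forall>a>0. card {n. a < t n \<and> t n \<le> a / lam} \<le> M" using band[OF lam_pos lam1] .
  then have "\<forall>a>0. card {n. a < t n \<and> t n \<le> a / lam} \<le> M0" unfolding M0_def by (rule someI_ex)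
  then show ?thesis using a by blast
qed

lemma new_card:
  assumes rho: "\<rho> > 0" and dpos: "\<delta> > 0" and d1: "\<delta> \<le> lam * cc / L"
  shows "real (card (pend \<delta> x' (lam * \<rho>) \<inter> {nm. \<not> t (fst nm) * \<rho> \<le> cc})) \<le> NN"
proof -
  define S where "S = {n. cc / \<rho> < t n \<and> t n \<le> (cc / \<rho>) / lam}"
  define F where "F = (\<lambda>n. {m. \<bar>pp n m - x'\<bar> \<le> 2 * lam * \<rho>})"
  have lr: "lam * \<rho> > 0" using lam_pos rho by simp
  have sub: "pend \<delta> x' (lam * \<rho>) \<inter> {nm. \<not> t (fst nm) * \<rho> \<le> cc} \<subseteq> Sigma S F"
  proof
    fix nm assume nm: "nm \<in> pend \<delta> x' (lam * \<rho>) \<inter> {nm. \<not> t (fst nm) * \<rho> \<le> cc}"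
    obtain n m where nmp: "nm = (n, m)" by (cases nm)
    have h1: "t n * (lam * \<rho>) \<le> cc" and h2: "\<bar>pp n m - x'\<bar> \<le> lam * \<rho> + L * \<delta> / t n"
      and h3: "cc < t n * \<rho>" using nm nmp unfolding pend_def by auto
    have tn: "t n > 0" using tpos by simp
    have "cc / \<rho> < t n" using h3 rho by (simp add: divide_less_eq)
    moreover have "t n \<le> (cc / \<rho>) / lam" using h1 rho lam_pos by (simp add: le_divide_eq mult_ac)
    ultimately have nS: "n \<in> S" unfolding S_def by simp
    have "L * \<delta> \<le> lam * cc" using d1 L1 by (simp add: le_divide_eq mult_ac)
    also have "\<dots> \<le> lam * (t n * \<rho>)" using h3 lam_pos by (intro mult_left_mono) auto
    finally have "L * \<delta> / t n \<le> lam * \<rho>" using tn by (simp add: divide_le_eq mult_ac)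
    then have "m \<in> F n" unfolding F_def using h2 by simp
    then show "nm \<in> Sigma S F" using nS nmp by simp
  qed
  have Fb: "finite (F n) \<and> real (card (F n)) \<le> 8 * L * cc + 1" if "n \<in> S" for n
  proof -
    have "finite (F n) \<and> real (card (F n)) \<le> 2 * (2 * L * t n * (2 * lam * \<rho>)) + 1"
      unfolding F_def using lam_pos rho by (intro mset_bound) simp
    moreover have "t n * lam * \<rho> \<le> cc" using that rho lam_pos unfolding S_def
      by (simp add: le_divide_eq mult_ac)
    then have "2 * (2 * L * t n * (2 * lam * \<rho>)) = 8 * L * (t n * lam * \<rho>)" by (simp add: mult_ac)
    moreover have "8 * L * (t n * lam * \<rho>) \<le> 8 * L * cc" using \<open>t n * lam * \<rho> \<le> cc\<close> L1 by simp
    ultimately show ?thesis by linarith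
  qed
  have fS: "finite S" unfolding S_def by (rule finite_subset[OF _ fin_t[of "(cc / \<rho>) / lam"]]) auto
  have cS: "card S \<le> M0" unfolding S_def using M0_prop[of "cc / \<rho>"] cc_pos rho by simp
  have fin: "finite (Sigma S F)" using fS Fb by (intro finite_SigmaI) auto
  have "real (card (pend \<delta> x' (lam * \<rho>) \<inter> {nm. \<not> t (fst nm) * \<rho> \<le> cc})) \<le> real (card (Sigma S F))"
    using card_mono[OF fin sub] by simp
  also have "card (Sigma S F) = (\<Sum>n\<in>S. card (F n))" using fS Fb by (intro card_SigmaI) auto
  also have "real (\<Sum>n\<in>S. card (F n)) = (\<Sum>n\<in>S. real (card (F n)))" by simp
  also have "\<dots> \<le> real (card S) * (8 * L * cc + 1)" using Fb by (intro sum_bounded_above) auto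
  also have "\<dots> \<le> real M0 * (8 * L * cc + 1)" using cS L1 cc_pos by (intro mult_right_mono) auto
  finally show ?thesis unfolding NN_def .
qed

lemma step:
  assumes rho: "\<rho> > 0" and dpos: "\<delta> > 0"
    and d1: "\<delta> \<le> lam * cc / L" and d2: "\<delta> \<le> eta * lam * cc / (L * B powr (1/theta))"
    and B1: "B \<ge> 1" and B6: "6 * NN \<le> B"
    and Phi: "Wt \<rho> (pend \<delta> x \<rho>) \<le> B"
    and hx': "\<bar>x' - z\<bar> \<le> \<alpha> * \<rho> - lam * \<rho>" and hz: "\<bar>z - x\<bar> \<le> \<rho> - \<alpha> * \<rho>"
    and hk: "\<rho> / 2 \<le> \<rho>0 \<Longrightarrow> 2 * \<alpha> * \<rho> \<le> \<bar>z - qsel \<delta> x \<rho>\<bar>"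
  shows "Wt (lam * \<rho>) (pend \<delta> x' (lam * \<rho>)) \<le> B"
proof -
  define P where "P = pend \<delta> x \<rho>"
  define P' where "P' = pend \<delta> x' (lam * \<rho>)"
  define Old where "Old = P' \<inter> {nm. t (fst nm) * \<rho> \<le> cc}"
  define New where "New = P' \<inter> {nm. \<not> t (fst nm) * \<rho> \<le> cc}"
  have lr: "lam * \<rho> > 0" using lam_pos rho by simp
  have fP: "finite P" unfolding P_def using pend_fin rho dpos by simp
  have fP': "finite P'" unfolding P'_def using pend_fin lr dpos by simp
  have split: "Wt (lam * \<rho>) P' = Wt (lam * \<rho>) Old + Wt (lam * \<rho>) New"
  proof -
    have "P' - {nm. t (fst nm) * \<rho> \<le> cc} = New" unfolding New_def by auto
    then show ?thesis unfolding Wt_def Old_def using sum.Int_Diff[OF fP', of _ "{nm. t (fst nm) * \<rho> \<le> cc}"]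
      by simp
  qed
  have OldP: "Old \<subseteq> P"
  proof
    fix nm assume nm: "nm \<in> Old"
    obtain n m where nmp: "nm = (n, m)" by (cases nm)
    have h1: "t n * \<rho> \<le> cc" and h2: "\<bar>pp n m - x'\<bar> \<le> lam * \<rho> + L * \<delta> / t n"
      using nm nmp unfolding Old_def P'_def pend_def by auto
    have "\<bar>pp n m - x\<bar> \<le> \<rho> + L * \<delta> / t n" using h2 hx' hz by linarith
    then show "nm \<in> P" using h1 nmp unfolding P_def pend_def by simp
  qed
  have fOld: "finite Old" using OldP fP finite_subset by blast
  have Oldw: "Wt (lam * \<rho>) Old = 3/2 * Wt \<rho> Old"
    unfolding Wt_def sum_distrib_left using wt_lam[OF rho] by (intro sum.cong) auto
  have smallP: "L * \<delta> / t (fst nm) \<le> eta * lam * \<rho>" if "nm \<in> P" for nm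
    using s_small[OF rho dpos _ Phi B1 d2] that unfolding P_def by blast
  have A: "2 * Wt \<rho> Old \<le> B"
  proof (cases "\<rho> / 2 \<le> \<rho>0")
    case False
    have "P = {}"
    proof (rule ccontr)
      assume "P \<noteq> {}"
      then obtain n m where "(n, m) \<in> P" by auto
      then have "t n * \<rho> \<le> cc" unfolding P_def pend_def by simp
      moreover have "cc \<le> 2 * \<rho>0 * t 0" by (rule cc_le)
      moreover have "2 * \<rho>0 * t 0 < \<rho> * t 0" using False tpos[of 0] by simp
      moreover have "\<rho> * t 0 \<le> \<rho> * t n" using t_mono[of 0 n] rho by simp
      ultimately show False by (simp add: mult_ac)
    qed
    then have "Old = {}" using OldP by blast
    then show ?thesis using B1 unfolding Wt_def by simp
  next
    case True
    define q where "q = qsel \<delta> x \<rho>"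
    have zq: "2 * \<alpha> * \<rho> \<le> \<bar>z - q\<bar>" using hk[OF True] unfolding q_def .
    define Q where "Q = win \<delta> x \<rho> q"
    define W where "W = win \<delta> x \<rho> x'"
    have OldW: "Old \<subseteq> W"
    proof
      fix nm assume nm: "nm \<in> Old"
      have "nm \<in> P" using nm OldP by blast
      then have s: "L * \<delta> / t (fst nm) \<le> eta * lam * \<rho>" by (rule smallP)
      have "\<bar>pp (fst nm) (snd nm) - x'\<bar> \<le> lam * \<rho> + L * \<delta> / t (fst nm)"
        using nm unfolding Old_def P'_def pend_def by (auto split: prod.splits)
      then have "\<bar>pp (fst nm) (snd nm) - x'\<bar> \<le> rr \<rho>" using s unfolding rr_def by (simp add: algebra_simps)
      then show "nm \<in> W" using \<open>nm \<in> P\<close> unfolding W_def win_def P_def by simp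
    qed
    have OldQ: "Old \<inter> Q = {}"
    proof (rule ccontr)
      assume "Old \<inter> Q \<noteq> {}"
      then obtain nm where nm: "nm \<in> Old" "nm \<in> Q" by blast
      have "nm \<in> P" using nm OldP by blast
      then have s: "L * \<delta> / t (fst nm) \<le> eta * lam * \<rho>" by (rule smallP)
      have a1: "\<bar>pp (fst nm) (snd nm) - x'\<bar> \<le> lam * \<rho> + L * \<delta> / t (fst nm)"
        using nm unfolding Old_def P'_def pend_def by (auto split: prod.splits)
      have a2: "\<bar>pp (fst nm) (snd nm) - q\<bar> \<le> lam * (1 + eta) * \<rho>"
        using nm unfolding Q_def win_def rr_def by simp
      have "\<alpha> * \<rho> \<le> lam * (1 + 2 * eta) * \<rho>"
        using a1 a2 s zq hx' by (simp add: algebra_simps)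
      then have "\<alpha> \<le> lam * (1 + 2 * eta)" using rho by simp
      then show False using lam_eta by simp
    qed
    have fW: "finite W" using fP unfolding W_def win_def P_def by simp
    have fQ: "finite Q" using fP unfolding Q_def win_def P_def by simp
    have "Wt \<rho> Old \<le> Wt \<rho> W" using fW OldW by (rule Wt_mono)
    also have "\<dots> \<le> Wt \<rho> Q" unfolding W_def Q_def q_def using qsel_max rho dpos by simp
    finally have o1: "Wt \<rho> Old \<le> Wt \<rho> Q" .
    have "Wt \<rho> Old + Wt \<rho> Q = Wt \<rho> (Old \<union> Q)"
      unfolding Wt_def using fOld fQ OldQ by (simp add: sum.union_disjoint)
    also have "\<dots> \<le> Wt \<rho> P" using fP OldP by (intro Wt_mono) (auto simp: Q_def win_def P_def)
    also have "\<dots> \<le> B" using Phi unfolding P_def .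
    finally show ?thesis using o1 by simp
  qed
  have Bn: "Wt (lam * \<rho>) New \<le> real (card New) * (3/2)"
    unfolding Wt_def
  proof (rule sum_bounded_above)
    fix nm assume nm: "nm \<in> New"
    then have h: "cc < t (fst nm) * \<rho>" unfolding New_def by simp
    have tn: "t (fst nm) > 0" using tpos by simp
    have "cc / (t (fst nm) * (lam * \<rho>)) \<le> 1 / lam"
      using h lam_pos rho tn by (simp add: divide_le_eq field_simps)
    then have "(cc / (t (fst nm) * (lam * \<rho>))) powr theta \<le> (1 / lam) powr theta"
      using theta_pos cc_pos tn lr by (intro powr_mono2) auto
    then show "wt (fst nm) (lam * \<rho>) \<le> 3/2" unfolding wt_def using w_eq by simp
  qed
  have cN: "real (card New) \<le> NN" unfolding New_def P'_def using new_card[OF rho dpos d1] .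
  have "Wt (lam * \<rho>) P' \<le> 3/2 * (B / 2) + NN * (3/2)"
    using split Oldw A Bn cN by linarith
  also have "\<dots> \<le> B" using B6 by simp
  finally show ?thesis unfolding P'_def .
qed


definition "sig l = move (dl (fst (hd l)) (snd (hd l))) (last l)"

lemma sig_eq: "sig (map b [0..<Suc k]) = move (dl (fst (b 0)) (snd (b 0))) (b k)"
  unfolding sig_def by (simp add: hd_map last_map del: upt_Suc)

lemma snd_move: "snd (move \<delta> xr) = \<alpha> * snd xr" unfolding move_def by simp

lemma move_props:
  assumes x: "x \<in> msupp \<mu>" and rho: "\<rho> > 0"
  shows "fst (move \<delta> (x, \<rho>)) \<in> msupp \<mu> \<and> \<bar>fst (move \<delta> (x, \<rho>)) - x\<bar> \<le> \<rho> / 2 \<and>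
    (\<rho> / 2 \<le> \<rho>0 \<longrightarrow> eps0 * (\<rho> / 2) \<le> \<bar>fst (move \<delta> (x, \<rho>)) - qsel \<delta> x \<rho>\<bar>)"
proof (cases "\<rho> / 2 \<le> \<rho>0")
  case True
  have ex: "\<exists>z. z \<in> msupp \<mu> \<and> \<bar>z - x\<bar> \<le> \<rho>/2 \<and> eps0 * (\<rho>/2) \<le> \<bar>z - qsel \<delta> x \<rho>\<bar>"
    using kill[OF x _ True, of "qsel \<delta> x \<rho>"] rho by auto
  have "fst (move \<delta> (x, \<rho>)) = zsel x \<rho> (qsel \<delta> x \<rho>)" unfolding move_def using True x rho by simp
  then show ?thesis using someI_ex[OF ex] unfolding zsel_def by simp
next
  case False
  then show ?thesis unfolding move_def using x rho by simp
qed

lemma radius: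
  assumes BL: "bob_legal K \<beta> (\<lambda>k. move \<delta> (b k)) b k" and j: "j \<le> k"
  shows "snd (b j) = snd (b 0) * lam ^ j"
  using j
proof (induction j)
  case (Suc j)
  then have "j < k" by simp
  then have "snd (b (Suc j)) = \<beta> * snd (move \<delta> (b j))" using BL unfolding bob_legal_def by blast
  then show ?case using Suc by (simp add: snd_move lam_def mult_ac)
qed simp

lemma win: "winning_ab_on (msupp \<mu>) \<alpha> \<beta> (\<phi> ` Etilde t y)"
  unfolding winning_ab_on_def
proof (intro exI[of _ sig] allI)
  fix b :: "nat \<Rightarrow> real \<times> real"
  define \<delta>0 where "\<delta>0 = dl (fst (b 0)) (snd (b 0))"
  define A where "A = (\<lambda>k. move \<delta>0 (b k))"
  have aeq: "(\<lambda>k. sig (map b [0..<Suc k])) = A" unfolding A_def \<delta>0_def sig_eq by simp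
  define K where "K = msupp \<mu>"
  have P1: "\<forall>k. bob_legal K \<beta> A b k \<longrightarrow> alice_legal K \<alpha> A b k"
  proof (intro allI impI)
    fix k assume BL: "bob_legal K \<beta> A b k"
    have r0: "snd (b 0) > 0" using BL unfolding bob_legal_def by simp
    have rk: "snd (b k) = snd (b 0) * lam ^ k" using radius[of K \<delta>0 b k k] BL unfolding A_def by simp
    then have rkpos: "snd (b k) > 0" using r0 lam_pos by simp
    have xk: "fst (b k) \<in> K"
    proof (cases k)
      case 0 then show ?thesis using BL unfolding bob_legal_def by simp
    next
      case (Suc j) then show ?thesis using BL unfolding bob_legal_def by auto
    qed
    have bk: "b k = (fst (b k), snd (b k))" by simp
    have mp: "fst (move \<delta>0 (b k)) \<in> K \<and> \<bar>fst (move \<delta>0 (b k)) - fst (b k)\<bar> \<le> snd (b k) / 2"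
      using move_props[OF xk[unfolded K_def] rkpos, of \<delta>0] bk unfolding K_def by metis
    have "\<alpha> * snd (b k) \<le> snd (b k) / 2" using alpha_quarter rkpos by simp
    then show "alice_legal K \<alpha> A b k" unfolding alice_legal_def A_def snd_move
      using mp by (simp add: abs_minus_commute)
  qed
  have P2: "(\<forall>k. bob_legal K \<beta> A b k) \<longrightarrow>
           (\<forall>x\<in>K. (\<forall>k. \<bar>x - fst (b k)\<bar> \<le> snd (b k)) \<longrightarrow> x \<in> \<phi> ` Etilde t y)"
  proof (intro impI ballI)
    assume BL: "\<forall>k. bob_legal K \<beta> A b k"
    fix x assume xK: "x \<in> K" and xin: "\<forall>k. \<bar>x - fst (b k)\<bar> \<le> snd (b k)"
    define X where "X = (\<lambda>k. fst (b k))"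
    define R where "R = (\<lambda>k. snd (b k))"
    define Z where "Z = (\<lambda>k. fst (A k))"
    have R0: "R 0 > 0" using BL unfolding bob_legal_def R_def by simp
    have Rk: "R k = R 0 * lam ^ k" for k using radius[of K \<delta>0 b k k] BL unfolding A_def R_def by simp
    have Rpos: "R k > 0" for k using Rk[of k] R0 lam_pos by simp
    have RS: "R (Suc k) = lam * R k" for k
    proof -
      have "R (Suc k) = R 0 * lam ^ Suc k" by (rule Rk)
      also have "\<dots> = lam * (R 0 * lam ^ k)" by simp
      also have "\<dots> = lam * R k" using Rk[of k] by simp
      finally show ?thesis .
    qed
    have XK: "X k \<in> K" for k
    proof (cases k)
      case 0 then show ?thesis using BL unfolding bob_legal_def X_def by simp
    next
      case (Suc j) then show ?thesis using BL[rule_format, of k] unfolding bob_legal_def X_def by auto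
    qed
    have AL: "alice_legal K \<alpha> A b k" for k using P1 BL by blast
    have hz: "\<bar>Z k - X k\<bar> \<le> R k - \<alpha> * R k" for k
      using AL[of k] unfolding alice_legal_def Z_def X_def R_def A_def snd_move
      by (simp add: abs_minus_commute)
    have hx': "\<bar>X (Suc k) - Z k\<bar> \<le> \<alpha> * R k - lam * R k" for k
    proof -
      have "snd (b (Suc k)) + \<bar>fst (A k) - fst (b (Suc k))\<bar> \<le> snd (A k)"
        using BL[rule_format, of "Suc k"] unfolding bob_legal_def by blast
      then show ?thesis unfolding Z_def X_def A_def snd_move using RS[of k] unfolding R_def
        by (simp add: abs_minus_commute)
    qed
    have hk: "R k / 2 \<le> \<rho>0 \<Longrightarrow> 2 * \<alpha> * R k \<le> \<bar>Z k - qsel \<delta>0 (X k) (R k)\<bar>" for k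
    proof -
      assume h: "R k / 2 \<le> \<rho>0"
      have bk: "b k = (X k, R k)" unfolding X_def R_def by simp
      have "eps0 * (R k / 2) \<le> \<bar>Z k - qsel \<delta>0 (X k) (R k)\<bar>"
        using move_props[OF XK[of k, unfolded K_def] Rpos[of k], of \<delta>0] h unfolding Z_def A_def bk by simp
      moreover have "2 * \<alpha> * R k \<le> eps0 * (R k / 2)" using alpha_le Rpos[of k] by simp
      ultimately show ?thesis by linarith
    qed
    define B0 where "B0 = Bnd (X 0) (R 0)"
    have B1: "B0 \<ge> 1" and B6: "6 * NN \<le> B0" unfolding B0_def Bnd_def by auto
    have d0: "\<delta>0 = min 1 (min (lam * cc / L) (eta * lam * cc / (L * B0 powr (1/theta))))"
      unfolding \<delta>0_def dl_def B0_def X_def R_def by simp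
    have dpos: "\<delta>0 > 0" unfolding d0 using lam_pos cc_pos L1 eta_pos B1 by simp
    have d1: "\<delta>0 \<le> lam * cc / L" and d2: "\<delta>0 \<le> eta * lam * cc / (L * B0 powr (1/theta))"
      and d3: "\<delta>0 \<le> 1" unfolding d0 by auto
    have inv: "Wt (R k) (pend \<delta>0 (X k) (R k)) \<le> B0" for k
    proof (induction k)
      case 0
      have "pend \<delta>0 (X 0) (R 0) \<subseteq> pend 1 (X 0) (R 0)"
      proof
        fix nm assume nm: "nm \<in> pend \<delta>0 (X 0) (R 0)"
        have "L * \<delta>0 / t (fst nm) \<le> L * 1 / t (fst nm)" using d3 L1 tpos[of "fst nm"]
          by (intro divide_right_mono mult_left_mono) auto
        with nm show "nm \<in> pend 1 (X 0) (R 0)" unfolding pend_def by (auto split: prod.splits)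
      qed
      then have "Wt (R 0) (pend \<delta>0 (X 0) (R 0)) \<le> Wt (R 0) (pend 1 (X 0) (R 0))"
        using pend_fin[OF R0, of 1] by (intro Wt_mono) auto
      also have "\<dots> \<le> B0" unfolding B0_def Bnd_def by simp
      finally show ?case .
    next
      case (Suc k)
      show ?case unfolding RS
        by (rule step[OF Rpos dpos d1 d2 B1 B6 Suc hx'[unfolded RS] hz hk])
    qed
    obtain u where u: "\<phi> u = x" using phi_surj by blast
    define Bp where "Bp = B0 powr (1/theta)"
    have Bp1: "Bp \<ge> 1" unfolding Bp_def using B1 theta_pos by (simp add: ge_one_powr_ge_zero)
    have key: "\<delta>0 < \<bar>t n * u - y n - of_int m\<bar>" for n m
    proof -
      have tn: "t n > 0" using tpos by simp
      have e: "cc / (Bp * t n) / R 0 > 0" using cc_pos Bp1 tn R0 by simp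
      obtain k where k: "lam ^ k < cc / (Bp * t n) / R 0" using real_arch_pow_inv[OF e lam1] by blast
      have "R k * (Bp * t n) < cc" using k R0 Bp1 tn unfolding Rk[of k] by (simp add: field_simps)
      then have small: "t n * R k < cc / Bp" using Bp1 by (simp add: field_simps)
      have "cc / Bp \<le> cc" using Bp1 cc_pos by (simp add: divide_le_eq)
      then have le: "t n * R k \<le> cc" using small by simp
      have notin: "(n, m) \<notin> pend \<delta>0 (X k) (R k)"
      proof
        assume "(n, m) \<in> pend \<delta>0 (X k) (R k)"
        then have "cc / (t n * R k) \<le> Bp"
          using old_bound[OF Rpos less_imp_le[OF dpos] _ inv[of k]] unfolding Bp_def by fastforce
        then have "cc \<le> Bp * (t n * R k)" using tn Rpos[of k] by (simp add: divide_le_eq mult_ac)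
        then show False using small Bp1 by (simp add: field_simps)
      qed
      then have far: "R k + L * \<delta>0 / t n < \<bar>pp n m - X k\<bar>" using le unfolding pend_def by auto
      have "L * \<delta>0 / t n < \<bar>x - pp n m\<bar>" using far xin[rule_format, of k] unfolding X_def R_def by linarith
      also have "\<dots> \<le> L * \<bar>u - (y n + of_int m) / t n\<bar>" using lip2 unfolding pp_def u[symmetric] by blast
      finally have h: "L * (\<delta>0 / t n) < L * \<bar>u - (y n + of_int m) / t n\<bar>" by simp
      have "\<delta>0 / t n < \<bar>u - (y n + of_int m) / t n\<bar>" by (rule mult_left_less_imp_less[OF h]) (use L1 in simp)
      then have "\<delta>0 < t n * \<bar>u - (y n + of_int m) / t n\<bar>" using tn by (simp add: divide_less_eq mult_ac)
      also have "t n * \<bar>u - (y n + of_int m) / t n\<bar> = \<bar>t n * u - y n - of_int m\<bar>"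
      proof -
        have "t n * (u - (y n + of_int m) / t n) = t n * u - y n - of_int m" using tn by (simp add: field_simps)
        then show ?thesis using tn by (metis abs_mult abs_of_pos)
      qed
      finally show ?thesis .
    qed
    have "\<delta>0 \<le> tdist (t n * u) (y n)" for n
      unfolding tdist_def by (rule cINF_greatest) (use key less_imp_le in auto)
    then have "\<delta>0 \<le> (INF n. tdist (t n * u) (y n))" by (intro cINF_greatest) auto
    then have "u \<in> Etilde t y" unfolding Etilde_def using dpos by simp
    then show "x \<in> \<phi> ` Etilde t y" using u by blast
  qed
  show "let a = (\<lambda>k. sig (map b [0..<Suc k])) in
          (\<forall>k. bob_legal (msupp \<mu>) \<beta> a b k \<longrightarrow> alice_legal (msupp \<mu>) \<alpha> a b k) \<and>
          ((\<forall>k. bob_legal (msupp \<mu>) \<beta> a b k) \<longrightarrow>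
           (\<forall>x\<in>msupp \<mu>. (\<forall>k. \<bar>x - fst (b k)\<bar> \<le> snd (b k)) \<longrightarrow> x \<in> \<phi> ` Etilde t y))"
    unfolding Let_def aeq using P1 P2 unfolding K_def by blast
qed

end


theorem theorem1p1:
  fixes \<mu> :: "real measure" and C \<gamma> \<alpha> :: real
    and \<phi> :: "real \<Rightarrow> real" and y t :: "nat \<Rightarrow> real"
  assumes "abs_decaying \<mu> C \<gamma>"
    and "0 < \<alpha>" and "\<alpha> \<le> (1/4) * (1 / (3 * C)) powr (1 / \<gamma>)"
    and "bi_lipschitz \<phi>" and "lacunary t"
  shows "alpha_winning_on (msupp \<mu>) \<alpha> (\<phi> ` Etilde t y)"
proof -
  from assms(1) obtain \<rho>0 where Cpos: "C > 0" and gpos: "\<gamma> > 0" and r0: "\<rho>0 > 0"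
    and sets: "sets \<mu> = sets borel"
    and dec: "\<forall>\<rho> x y \<epsilon>. 0 < \<rho> \<and> \<rho> \<le> \<rho>0 \<and> x \<in> msupp \<mu> \<and> \<epsilon> > 0 \<longrightarrow>
        emeasure \<mu> (cball x \<rho> \<inter> cball y (\<epsilon> * \<rho>))
          < ennreal (C * \<epsilon> powr \<gamma>) * emeasure \<mu> (cball x \<rho>)"
    unfolding abs_decaying_def locally_finite_borel_def by blast
  from assms(4) obtain L where L1: "L \<ge> 1" and bl: "\<forall>x y. x \<noteq> y \<longrightarrow>
      1 / L \<le> \<bar>\<phi> x - \<phi> y\<bar> / \<bar>x - y\<bar> \<and> \<bar>\<phi> x - \<phi> y\<bar> / \<bar>x - y\<bar> \<le> L"
    unfolding bi_lipschitz_def by blast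
  have lip1: "\<bar>a - b\<bar> \<le> L * \<bar>\<phi> a - \<phi> b\<bar>" for a b
  proof (cases "a = b")
    case False
    then have h: "1 / L \<le> \<bar>\<phi> a - \<phi> b\<bar> / \<bar>a - b\<bar>" using bl by blast
    have ab: "\<bar>a - b\<bar> > 0" using False by simp
    from h have "1 \<le> L * (\<bar>\<phi> a - \<phi> b\<bar> / \<bar>a - b\<bar>)" using L1 by (simp add: divide_le_eq mult_ac)
    then have "1 * \<bar>a - b\<bar> \<le> L * (\<bar>\<phi> a - \<phi> b\<bar> / \<bar>a - b\<bar>) * \<bar>a - b\<bar>"
      using ab by (intro mult_right_mono) auto
    then show ?thesis using ab by simp
  qed simp
  have lip2: "\<bar>\<phi> a - \<phi> b\<bar> \<le> L * \<bar>a - b\<bar>" for a b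
  proof (cases "a = b")
    case False
    then have h: "\<bar>\<phi> a - \<phi> b\<bar> / \<bar>a - b\<bar> \<le> L" using bl by blast
    have ab: "\<bar>a - b\<bar> > 0" using False by simp
    then show ?thesis using h by (simp add: divide_le_eq mult_ac)
  qed simp
  from assms(5) have tpos: "\<And>n. t n > 0" and q1: "(INF n. t (Suc n) / t n) > 1"
    unfolding lacunary_def by auto
  define q0 where "q0 = (INF n. t (Suc n) / t n)"
  have tq: "t (Suc n) \<ge> q0 * t n" for n
  proof -
    have "bdd_below (range (\<lambda>n. t (Suc n) / t n))"
      using tpos by (intro bdd_belowI[of _ 0]) (auto intro: divide_nonneg_nonneg less_imp_le)
    then have "q0 \<le> t (Suc n) / t n" unfolding q0_def by (rule cINF_lower) simp
    then show ?thesis using tpos[of n] by (simp add: le_divide_eq)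
  qed
  show ?thesis
    unfolding alpha_winning_on_def
  proof (intro allI impI)
    fix \<beta> :: real assume b: "0 < \<beta> \<and> \<beta> < 1"
    show "winning_ab_on (msupp \<mu>) \<alpha> \<beta> (\<phi> ` Etilde t y)"
    proof (cases "msupp \<mu> = {}")
      case True
      show ?thesis unfolding winning_ab_on_def Let_def
        by (rule exI[of _ "\<lambda>_. (0, 0)"]) (simp add: bob_legal_def True)
    next
      case False
      interpret gm \<mu> C \<gamma> \<rho>0 \<alpha> \<beta> L q0 \<phi> t y
        using Cpos gpos r0 sets dec assms(2,3) b L1 lip1 lip2 tpos q1 tq False
        unfolding q0_def by unfold_locales auto
      show ?thesis by (rule win)
    qed
  qed
qed

end
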